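(* Let $k\ge 2$ and $m\ge1$ be integers. Let $U_k$ be the $(2^k-1-k)\times(2^k-1)$ binary matrix whose columns are indexed by $1,\dots,2^k-1$ and whose rows are indexed by the integers $r\in\{1,\dots,2^k-1\}$ that are not powers of $2$, where the row indexed by $r$, with $2^t<r<2^{t+1}$, has $1$-entries exactly in columns $r$, $r-2^t$, $2^t$. Let $T_k$ be the square $(2^k-1-k)\times(2^k-1-k)$ submatrix of $U_k$ formed by the columns whose index is not a power of $2$, and $R_k$ the $(2^k-1-k)\times k$ submatrix formed by the columns indexed by $2^{k-1},\dots,2,1$ (in this order). Define the $((2^k-1)m-k)\times((2^k-1)m)$ binary block matrix \[ U_{k,m}=\left(\begin{array}{ccc|c|c} T_k&&&&R_k\\ &\ddots&&&\vdots\\ &&T_k&&R_k\\\hline &&&I_{(m-1)k}&\begin{array}{c}I_k\\ \vdots\\ I_k\end{array} \end{array}\right), \] where there are $m$ diagonal copies of $T_k$, the last block column consists of $m$ copies of $R_k$ stacked above $m-1$ copies of $I_k$, and all unspecified blocks are zero. Then $u(U_{k,m})\ge 2^{k-1}m$.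
   Context: All matrices are binary; $I_j$ is the $j\times j$ identity. For a nonempty set $S$ of columns of a binary matrix, let $z$ be the sum over the integers of the columns in $S$; $S$ is $1$-free if no entry of $z$ equals $1$. For a binary $m'\times n'$ matrix $A$ with $m'<n'$, $u(A)$ is the smallest cardinality of a nonempty $1$-free set of columns of $A$. *)

theory Defs
  imports Main
begin

text \<open>Binary matrices are represented as functions nat => nat => bool
  (row index, column index, 0-based), together with explicit dimensions.\<close>

definition one_free :: "(nat \<Rightarrow> nat \<Rightarrow> bool) \<Rightarrow> nat \<Rightarrow> nat set \<Rightarrow> bool" where
  "one_free A mr S \<longleftrightarrow> (\<forall>i<mr. (\<Sum>j\<in>S. (of_bool (A i j) :: int)) \<noteq> 1)"

definition u_min :: "(nat \<Rightarrow> nat \<Rightarrow> bool) \<Rightarrow> nat \<Rightarrow> nat \<Rightarrow> nat" where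
  "u_min A mr nc = (LEAST c. \<exists>S. S \<subseteq> {..<nc} \<and> S \<noteq> {} \<and> one_free A mr S \<and> card S = c)"

definition is_pow2 :: "nat \<Rightarrow> bool" where
  "is_pow2 r \<longleftrightarrow> (\<exists>t. r = 2 ^ t)"

definition U_entry :: "nat \<Rightarrow> nat \<Rightarrow> bool" where
  "U_entry r c \<longleftrightarrow> (\<exists>t. 2 ^ t < r \<and> r < 2 ^ (t + 1) \<and> (c = r \<or> c = r - 2 ^ t \<or> c = 2 ^ t))"

definition nonpow :: "nat \<Rightarrow> nat list" where
  "nonpow k = filter (\<lambda>r. \<not> is_pow2 r) [1..<2 ^ k]"

definition T_mat :: "nat \<Rightarrow> nat \<Rightarrow> nat \<Rightarrow> bool" where
  "T_mat k i j = U_entry (nonpow k ! i) (nonpow k ! j)"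

definition R_mat :: "nat \<Rightarrow> nat \<Rightarrow> nat \<Rightarrow> bool" where
  "R_mat k i j = U_entry (nonpow k ! i) (2 ^ (k - 1 - j))"

text \<open>The block matrix U_{k,m}; p = 2^k-1-k. Column blocks: m copies of T_k (width m*p),
  identity part (width (m-1)*k), last block column (width k).\<close>
definition Ukm :: "nat \<Rightarrow> nat \<Rightarrow> nat \<Rightarrow> nat \<Rightarrow> bool" where
  "Ukm k m i j = (let p = 2 ^ k - 1 - k in
     if i < m * p then
       (if j < m * p then j div p = i div p \<and> T_mat k (i mod p) (j mod p)
        else if j < m * p + (m - 1) * k then False
        else R_mat k (i mod p) (j - m * p - (m - 1) * k))
     else
       (if j < m * p then False
        else if j < m * p + (m - 1) * k then j - m * p = i - m * p
        else j - m * p - (m - 1) * k = (i - m * p) mod k))"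

end

theory Submission
  imports Defs
begin

lemma pow_between_unique:
  fixes r :: nat
  assumes "2^t < r" "r < 2^(Suc t)" "2^s < r" "r < 2^(Suc s)"
  shows "s = t"
proof (rule ccontr)
  assume "s \<noteq> t"
  then have "Suc s \<le> t \<or> Suc t \<le> s" by arith
  then show False
  proof
    assume "Suc s \<le> t"
    then have "(2::nat)^(Suc s) \<le> 2^t" by (rule power_increasing) simp
    with assms show False by simp
  next
    assume "Suc t \<le> s"
    then have "(2::nat)^(Suc t) \<le> 2^s" by (rule power_increasing) simp
    with assms show False by simp
  qed
qed

lemma U_entry_iff:
  assumes "2^t < r" "r < 2^(Suc t)"
  shows "U_entry r c \<longleftrightarrow> (c = r \<or> c = r - 2^t \<or> c = 2^t)"
proof
  assume "U_entry r c"
  then obtain s where s: "2^s < r" "r < 2^(s+1)" "c = r \<or> c = r - 2^s \<or> c = 2^s"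
    unfolding U_entry_def by blast
  have "s = t" using pow_between_unique[of t r s] assms s by simp
  with s show "c = r \<or> c = r - 2^t \<or> c = 2^t" by simp
next
  assume "c = r \<or> c = r - 2^t \<or> c = 2^t"
  then show "U_entry r c" unfolding U_entry_def using assms by auto
qed

lemma between_not_pow:
  fixes r :: nat
  assumes "2^t < r" "r < 2^(Suc t)"
  shows "\<not> is_pow2 r"
proof
  assume "is_pow2 r"
  then obtain s where s: "r = 2^s" unfolding is_pow2_def by blast
  have "t < s" using assms(1) s by (simp add: power_strict_increasing_iff)
  moreover have "(2::nat)^s < 2^(Suc t)" using assms(2) s by simp
  then have "s < Suc t" using power_strict_increasing_iff[of "2::nat" s "Suc t"] by linarith
  ultimately show False by simp
qed

lemma U_entry_bound:
  assumes "U_entry r c" shows "0 < c \<and> c \<le> r"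
  using assms unfolding U_entry_def by auto

lemma exists_log:
  fixes r :: nat
  shows "0 < r \<Longrightarrow> \<exists>t. 2^t \<le> r \<and> r < 2^(Suc t)"
proof (induction r rule: less_induct)
  case (less r)
  show ?case
  proof (cases "r = 1")
    case True then show ?thesis by (intro exI[of _ 0]) simp
  next
    case False
    then have "0 < r div 2" "r div 2 < r" using less.prems by auto
    then obtain t where t: "2^t \<le> r div 2" "r div 2 < 2^(Suc t)" using less.IH by blast
    then have "2^(Suc t) \<le> r" "r < 2^(Suc (Suc t))" by auto
    then show ?thesis by blast
  qed
qed

lemma nonpow_has_t:
  fixes r :: nat
  assumes "0 < r" "\<not> is_pow2 r"
  shows "\<exists>t. 2^t < r \<and> r < 2^(Suc t)"
proof -
  obtain t where t: "2^t \<le> r" "r < 2^(Suc t)" using exists_log assms(1) by blast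
  have "2^t \<noteq> r" using assms(2) unfolding is_pow2_def by blast
  with t show ?thesis by (intro exI[of _ t]) simp
qed

definition good :: "nat \<Rightarrow> nat set \<Rightarrow> bool" where
  "good k S \<longleftrightarrow> (\<forall>r. 0 < r \<longrightarrow> r < 2^k \<longrightarrow> \<not> is_pow2 r \<longrightarrow> card {c\<in>S. U_entry r c} \<noteq> 1)"

lemma comb:
  "S \<subseteq> {1..<2^k} \<Longrightarrow> S \<noteq> {} \<Longrightarrow> good k S \<Longrightarrow> 2^(k-1) \<le> card S \<and> (\<exists>t<k. 2^t \<in> S)"
proof (induction k arbitrary: S)
  case 0
  then show ?case by auto
next
  case (Suc k)
  define h :: nat where "h = 2^k"
  have fin: "finite S" using Suc.prems(1) finite_subset by blast
  have key: "card {c\<in>S. U_entry (h+a) c} \<noteq> 1" if "0 < a" "a < h" for a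
  proof -
    have "2^k < h + a" "h + a < 2^(Suc k)" using that h_def by auto
    then have "\<not> is_pow2 (h+a)" using between_not_pow by blast
    moreover have "h + a < 2^(Suc k)" using that h_def by auto
    moreover have "0 < h + a" using that by simp
    ultimately show ?thesis using Suc.prems(3) unfolding good_def by simp
  qed
  have ent: "{c\<in>S. U_entry (h+a) c} = {h+a, a, h} \<inter> S" if "0 < a" "a < h" for a
  proof -
    have b: "2^k < h + a" "h + a < 2^(Suc k)" using that h_def by auto
    have "U_entry (h+a) c \<longleftrightarrow> (c = h+a \<or> c = a \<or> c = h)" for c
      using U_entry_iff[OF b, of c] h_def by simp
    then show ?thesis by blast
  qed
  show ?case
  proof (cases "h \<in> S")
    case True
    have one: "a \<in> S \<or> h + a \<in> S" if "0 < a" "a < h" for a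
    proof (rule ccontr)
      assume "\<not> (a \<in> S \<or> h + a \<in> S)"
      then have "{h+a, a, h} \<inter> S = {h}" using True by auto
      then show False using key[OF that] ent[OF that] by simp
    qed
    define g where "g a = (if a \<in> S then a else h + a)" for a
    have inj: "inj_on g {1..<h}" unfolding inj_on_def g_def by auto
    have sub: "g ` {1..<h} \<subseteq> S - {h}"
    proof
      fix y assume "y \<in> g ` {1..<h}"
      then obtain a where a: "a \<in> {1..<h}" "y = g a" by blast
      then show "y \<in> S - {h}" using one[of a] unfolding g_def by (auto split: if_splits)
    qed
    have "card (g ` {1..<h}) \<le> card (S - {h})" using sub fin by (intro card_mono) auto
    then have "h - 1 \<le> card S - 1" using inj True fin by (simp add: card_image)
    moreover have "card S > 0" using True fin by (auto simp: card_gt_0_iff)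
    moreover have "h \<ge> 1" using h_def by simp
    ultimately have "h \<le> card S" by arith
    then show ?thesis using True h_def by auto
  next
    case False
    have eqv: "a \<in> S \<longleftrightarrow> h + a \<in> S" if "0 < a" "a < h" for a
    proof (rule ccontr)
      assume "\<not> (a \<in> S \<longleftrightarrow> h + a \<in> S)"
      then have "{h+a, a, h} \<inter> S = {a} \<or> {h+a, a, h} \<inter> S = {h+a}" using False by auto
      then show False using key[OF that] ent[OF that] by auto
    qed
    define SL where "SL = S \<inter> {1..<h}"
    have SLsub: "SL \<subseteq> {1..<2^k}" using SL_def h_def by auto
    have SLne: "SL \<noteq> {}"
    proof -
      obtain x where x: "x \<in> S" using Suc.prems(2) by blast
      show ?thesis
      proof (cases "x < h")
        case True
        have "1 \<le> x" using x Suc.prems(1) by auto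
        then show ?thesis using x True SL_def by auto
      next
        case xh: False
        have "x \<noteq> h" using x False by auto
        moreover have "x < 2*h" using x Suc.prems(1) h_def by auto
        ultimately have "0 < x - h" "x - h < h" "h + (x - h) = x" using xh by auto
        then have "x - h \<in> S" using eqv x by metis
        then show ?thesis using SL_def \<open>0 < x - h\<close> \<open>x - h < h\<close> by auto
      qed
    qed
    have SLgood: "good k SL"
      unfolding good_def
    proof (intro allI impI)
      fix r :: nat assume r: "0 < r" "r < 2^k" "\<not> is_pow2 r"
      have "{c\<in>SL. U_entry r c} = {c\<in>S. U_entry r c}"
      proof (intro set_eqI iffI)
        fix c assume "c \<in> {c \<in> S. U_entry r c}"
        then have "c \<in> S" "U_entry r c" by auto
        then have "0 < c" "c < h" using U_entry_bound[of r c] r h_def by auto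
        then show "c \<in> {c \<in> SL. U_entry r c}" using \<open>c \<in> S\<close> \<open>U_entry r c\<close> SL_def by auto
      qed (auto simp: SL_def)
      moreover have "r < 2^Suc k" using r by simp
      ultimately show "card {c\<in>SL. U_entry r c} \<noteq> 1"
        using Suc.prems(3) r unfolding good_def by auto
    qed
    from Suc.IH[OF SLsub SLne SLgood] have IH: "2^(k-1) \<le> card SL" "\<exists>t<k. 2^t \<in> SL" by auto
    have k0: "k \<ge> 1" using SLsub SLne by (cases k) auto
    have "SL \<union> (\<lambda>a. h + a) ` SL \<subseteq> S"
    proof -
      have "h + a \<in> S" if "a \<in> SL" for a using that eqv[of a] unfolding SL_def by auto
      then show ?thesis unfolding SL_def by auto
    qed
    moreover have "SL \<inter> (\<lambda>a. h + a) ` SL = {}" unfolding SL_def by auto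
    moreover have "finite SL" using SLsub finite_subset by blast
    ultimately have "card (SL \<union> (\<lambda>a. h + a) ` SL) \<le> card S" "card (SL \<union> (\<lambda>a. h + a) ` SL) = card SL + card SL"
      using fin by (intro card_mono, simp_all) (simp add: card_Un_disjoint card_image)
    then have c2: "card SL + card SL \<le> card S" by simp
    have "(2::nat)^k = 2^(k-1) + 2^(k-1)" using k0 by (cases k) auto
    then have "2^k \<le> card S" using IH(1) c2 by simp
    moreover obtain t where "t < k" "2^t \<in> S" using IH(2) SL_def by auto
    ultimately show ?thesis by (auto intro: less_SucI)
  qed
qed


lemma one_free_card:
  assumes "finite S"
  shows "one_free A mr S \<longleftrightarrow> (\<forall>i<mr. card {j\<in>S. A i j} \<noteq> 1)"
proof -
  have "S \<inter> {j. A i j} = {j\<in>S. A i j}" for i by auto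
  then show ?thesis unfolding one_free_def using assms by simp
qed

lemma pow_ge: "k \<ge> 2 \<Longrightarrow> k + 2 \<le> (2::nat)^k"
proof (induction k rule: dec_induct)
  case base then show ?case by simp
next
  case (step n) then show ?case by simp
qed

lemma is_pow2_below:
  assumes "r < 2^k"
  shows "is_pow2 r \<longleftrightarrow> r \<in> (\<lambda>t. 2^t) ` {..<k}"
proof
  assume "is_pow2 r"
  then obtain t where t: "r = 2^t" unfolding is_pow2_def by blast
  then have "(2::nat)^t < 2^k" using assms by simp
  then have "t < k" using power_strict_increasing_iff[of "2::nat" t k] by linarith
  then show "r \<in> (\<lambda>t. 2^t) ` {..<k}" using t by blast
qed (auto simp: is_pow2_def)

lemma set_nonpow: "set (nonpow k) = {r. 0 < r \<and> r < 2^k \<and> \<not> is_pow2 r}"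
  unfolding nonpow_def by auto

lemma distinct_nonpow: "distinct (nonpow k)"
  unfolding nonpow_def by simp

lemma length_nonpow: "length (nonpow k) = 2^k - 1 - k"
proof -
  have "length (nonpow k) = card (set (nonpow k))"
    using distinct_nonpow distinct_card by metis
  also have "set (nonpow k) = {1..<2^k} - (\<lambda>t. 2^t) ` {..<k}"
    using is_pow2_below unfolding set_nonpow by auto
  also have "card \<dots> = card {1..<(2::nat)^k} - card ((\<lambda>t. (2::nat)^t) ` {..<k})"
  proof (rule card_Diff_subset)
    show "(\<lambda>t. (2::nat)^t) ` {..<k} \<subseteq> {1..<2^k}" by auto
  qed auto
  also have "card ((\<lambda>t. (2::nat)^t) ` {..<k}) = k"
    by (subst card_image) (auto simp: inj_on_def)
  finally show ?thesis by simp
qed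

lemma nth_nonpow:
  assumes "i < length (nonpow k)"
  shows "0 < nonpow k ! i \<and> nonpow k ! i < 2^k \<and> \<not> is_pow2 (nonpow k ! i)"
  using nth_mem[OF assms] unfolding set_nonpow by blast

locale stp =
  fixes k m :: nat
  assumes k2: "k \<ge> 2" and m1: "m \<ge> 1"
begin

definition "p = 2^k - 1 - k"
definition "N = nonpow k"
definition "n0 = m * p"
definition "n1 = m * p + (m - 1) * k"
definition "A = Ukm k m"

lemma p_pos: "0 < p"
  using pow_ge[OF k2] unfolding p_def by simp

lemma lenN: "length N = p" unfolding N_def p_def by (simp add: length_nonpow)

lemma nc_eq: "(2^k - 1) * m = n1 + k"
proof -
  have "2^k - 1 = p + k" using pow_ge[OF k2] unfolding p_def by simp
  then have "(2^k - 1) * m = m * p + m * k" by (simp add: algebra_simps)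
  moreover have "m * k = (m - 1) * k + k" using m1 by (cases m) auto
  ultimately show ?thesis unfolding n1_def by simp
qed

lemma mr_eq: "(2^k - 1) * m - k = n1" using nc_eq by simp

lemma n0_le: "n0 \<le> n1" unfolding n0_def n1_def by simp

lemma block_row:
  assumes "b < m" "i < p"
  shows "A (b*p+i) j = (if j < n0 then j div p = b \<and> T_mat k i (j mod p)
            else if j < n1 then False else R_mat k i (j - n1))"
proof -
  have lt: "b*p + i < m*p"
  proof -
    have "b*p + i < b*p + p" using assms by simp
    also have "\<dots> = Suc b * p" by simp
    also have "\<dots> \<le> m * p" using assms(1) by (intro mult_right_mono) auto
    finally show ?thesis .
  qed
  have d: "(b*p+i) div p = b" "(b*p+i) mod p = i" using assms p_pos by auto
  have pe: "2^k - 1 - k = p" by (simp add: p_def)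
  show ?thesis unfolding A_def Ukm_def Let_def pe using lt d
    by (simp add: n0_def n1_def diff_diff_left)
qed

lemma id_row:
  assumes "i < (m-1)*k"
  shows "A (n0+i) j = (if j < n0 then False else if j < n1 then j = n0 + i
             else j = n1 + i mod k)"
proof -
  have "\<not> n0 + i < m * p" unfolding n0_def by simp
  have pe: "2^k - 1 - k = p" by (simp add: p_def)
  show ?thesis unfolding A_def Ukm_def Let_def pe using \<open>\<not> n0 + i < m * p\<close>
    by (auto simp: n0_def n1_def diff_diff_left)
qed


definition "PS S = {j'. j' < k \<and> n1 + j' \<in> S}"
definition "L S b = (!) N ` {i'. i' < p \<and> b*p + i' \<in> S} \<union> (\<lambda>j'. 2^(k-1-j')) ` PS S"

lemma T_eq: "T_mat k i i' = U_entry (N!i) (N!i')" unfolding T_mat_def N_def by simp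
lemma R_eq: "R_mat k i j' = U_entry (N!i) (2^(k-1-j'))" unfolding R_mat_def N_def by simp

lemma pw_inj: "inj_on (\<lambda>j'. (2::nat)^(k-1-j')) {..<k}"
  unfolding inj_on_def by (auto simp: power_inject_exp)

lemma pw_pow: "is_pow2 (2^(k-1-j'))" unfolding is_pow2_def by blast

lemma N_inj: "inj_on ((!) N) {..<p}"
  using distinct_nonpow lenN unfolding inj_on_def N_def by (simp add: nth_eq_iff_index_eq)

lemma N_prop: "i < p \<Longrightarrow> 0 < N!i \<and> N!i < 2^k \<and> \<not> is_pow2 (N!i)"
  using nth_nonpow lenN unfolding N_def by simp

lemma bp_lt: "b < m \<Longrightarrow> i < p \<Longrightarrow> b*p + i < n0"
proof -
  assume assms: "b < m" "i < p"
  have "b*p + i < b*p + p" using assms by simp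
  also have "\<dots> = Suc b * p" by simp
  also have "\<dots> \<le> m * p" using assms(1) by (intro mult_right_mono) auto
  finally show ?thesis unfolding n0_def .
qed

lemma card_two_images:
  assumes "finite X" "finite Y" "inj_on f X" "inj_on g Y" "f ` X \<inter> g ` Y = {}"
  shows "card (f ` X \<union> g ` Y) = card X + card Y"
  using assms by (simp add: card_Un_disjoint card_image)

lemma block_card:
  assumes S: "S \<subseteq> {..<n1+k}" and b: "b < m" and i: "i < p"
  shows "card {j\<in>S. A (b*p+i) j} = card {c\<in>L S b. U_entry (N!i) c}"
proof -
  define X where "X = {i'. i' < p \<and> b*p+i' \<in> S \<and> U_entry (N!i) (N!i')}"
  define Y where "Y = {j'. j' \<in> PS S \<and> U_entry (N!i) (2^(k-1-j'))}"
  have finX: "finite X" unfolding X_def by simp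
  have finY: "finite Y" unfolding Y_def PS_def by simp
  have e1: "{j\<in>S. A (b*p+i) j} = (\<lambda>i'. b*p+i') ` X \<union> (\<lambda>j'. n1+j') ` Y"
  proof (intro set_eqI iffI)
    fix j assume "j \<in> {j\<in>S. A (b*p+i) j}"
    then have jS: "j \<in> S" and jA: "A (b*p+i) j" by auto
    have jlt: "j < n1 + k" using jS S by auto
    show "j \<in> (\<lambda>i'. b*p+i') ` X \<union> (\<lambda>j'. n1+j') ` Y"
    proof (cases "j < n0")
      case True
      then have h: "j div p = b" "T_mat k i (j mod p)" using jA block_row[OF b i, of j] by auto
      have "j = b*p + j mod p" using h(1) by (metis div_mult_mod_eq)
      moreover have "j mod p < p" using p_pos by simp
      ultimately have "j mod p \<in> X" unfolding X_def using h(2) jS T_eq by auto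
      then show ?thesis using \<open>j = b*p + j mod p\<close> by blast
    next
      case False
      then have "\<not> j < n1" using jA block_row[OF b i, of j] by (auto split: if_splits)
      then have h: "R_mat k i (j - n1)" using jA block_row[OF b i, of j] False by auto
      have "j - n1 \<in> Y" unfolding Y_def PS_def using h R_eq jS jlt \<open>\<not> j < n1\<close> by auto
      moreover have "j = n1 + (j - n1)" using \<open>\<not> j < n1\<close> by simp
      ultimately show ?thesis by blast
    qed
  next
    fix j assume "j \<in> (\<lambda>i'. b*p+i') ` X \<union> (\<lambda>j'. n1+j') ` Y"
    then show "j \<in> {j\<in>S. A (b*p+i) j}"
    proof
      assume "j \<in> (\<lambda>i'. b*p+i') ` X"
      then obtain i' where i': "i' \<in> X" "j = b*p+i'" by blast
      then have "i' < p" "b*p+i' \<in> S" "U_entry (N!i) (N!i')" unfolding X_def by auto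
      moreover have "(b*p+i') div p = b" "(b*p+i') mod p = i'" using \<open>i' < p\<close> p_pos by auto
      moreover have "b*p+i' < n0" using bp_lt[OF b \<open>i' < p\<close>] .
      ultimately show ?thesis using i' block_row[OF b i, of j] T_eq by auto
    next
      assume "j \<in> (\<lambda>j'. n1+j') ` Y"
      then obtain j' where j': "j' \<in> Y" "j = n1+j'" by blast
      then have "n1+j' \<in> S" "U_entry (N!i) (2^(k-1-j'))" unfolding Y_def PS_def by auto
      moreover have "\<not> n1 + j' < n0" using n0_le by simp
      ultimately show ?thesis using j' block_row[OF b i, of j] R_eq by auto
    qed
  qed
  have e2: "{c\<in>L S b. U_entry (N!i) c} = (!) N ` X \<union> (\<lambda>j'. 2^(k-1-j')) ` Y"
    unfolding L_def X_def Y_def by auto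
  have c1: "card ((\<lambda>i'. b*p+i') ` X \<union> (\<lambda>j'. n1+j') ` Y) = card X + card Y"
  proof (rule card_two_images[OF finX finY])
    show "(\<lambda>i'. b*p+i') ` X \<inter> (\<lambda>j'. n1+j') ` Y = {}"
      using bp_lt[OF b] n0_le unfolding X_def by fastforce
  qed (auto simp: inj_on_def)
  have c2: "card ((!) N ` X \<union> (\<lambda>j'. (2::nat)^(k-1-j')) ` Y) = card X + card Y"
  proof (rule card_two_images[OF finX finY])
    show "inj_on ((!) N) X" using N_inj by (rule inj_on_subset) (auto simp: X_def)
    show "inj_on (\<lambda>j'. (2::nat)^(k-1-j')) Y" using pw_inj by (rule inj_on_subset) (auto simp: Y_def PS_def)
    show "(!) N ` X \<inter> (\<lambda>j'. 2^(k-1-j')) ` Y = {}"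
      using N_prop pw_pow unfolding X_def by fastforce
  qed
  show ?thesis using e1 e2 c1 c2 by simp
qed


lemma two_card:
  assumes "u \<noteq> v" "card {x\<in>{u,v}. x \<in> S} \<noteq> 1"
  shows "u \<in> S \<longleftrightarrow> v \<in> S"
proof (rule ccontr)
  assume a: "\<not> (u \<in> S \<longleftrightarrow> v \<in> S)"
  have "{x\<in>{u,v}. x \<in> S} = {u} \<or> {x\<in>{u,v}. x \<in> S} = {v}"
  proof (cases "u \<in> S")
    case True then have "{x\<in>{u,v}. x \<in> S} = {u}" using a by blast
    then show ?thesis by blast
  next
    case False then have "{x\<in>{u,v}. x \<in> S} = {v}" using a by blast
    then show ?thesis by blast
  qed
  then show False using assms(2) by auto
qed

lemma id_set:
  assumes S: "S \<subseteq> {..<n1+k}" and i: "i < (m-1)*k"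
  shows "{j\<in>S. A (n0+i) j} = {x\<in>{n0+i, n1 + i mod k}. x \<in> S}"
proof -
  have "n0 + i < n1" using i unfolding n0_def n1_def by simp
  then show ?thesis using id_row[OF i] S n0_le by (auto split: if_splits)
qed

lemma id_equiv:
  assumes S: "S \<subseteq> {..<n1+k}" and of: "one_free A n1 S" and b: "b < m-1" and j: "j' < k"
  shows "n0 + (b*k+j') \<in> S \<longleftrightarrow> j' \<in> PS S"
proof -
  have finS: "finite S" using finite_subset[OF S] by simp
  have i: "b*k + j' < (m-1)*k"
  proof -
    have "b*k + j' < b*k + k" using j by simp
    also have "\<dots> = Suc b * k" by simp
    also have "\<dots> \<le> (m-1) * k" using b by (intro mult_right_mono) auto
    finally show ?thesis .
  qed
  have md: "(b*k+j') mod k = j'" using j by simp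
  have lt: "n0 + (b*k+j') < n1" using i unfolding n0_def n1_def by simp
  have ofc: "\<forall>i<n1. card {j\<in>S. A i j} \<noteq> 1" using iffD1[OF one_free_card[OF finS] of] .
  have c1: "card {j\<in>S. A (n0+(b*k+j')) j} \<noteq> 1" using ofc[rule_format, OF lt] .
  have c2: "card {x\<in>{n0+(b*k+j'), n1 + j'}. x \<in> S} \<noteq> 1" using c1 unfolding id_set[OF S i] md .
  have neq: "n0+(b*k+j') \<noteq> n1 + j'" using lt by simp
  have "n0 + (b*k+j') \<in> S \<longleftrightarrow> n1 + j' \<in> S" by (rule two_card[OF neq c2])
  then show ?thesis unfolding PS_def using j by simp
qed

lemma L_sub: "L S b \<subseteq> {1..<2^k}"
proof
  fix c assume "c \<in> L S b"
  then consider (a) i where "i < p" "c = N!i" | (b) j' where "c = 2^(k-1-j')"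
    unfolding L_def by blast
  then show "c \<in> {1..<2^k}"
  proof cases
    case a then show ?thesis using N_prop[OF a(1)] by simp
  next
    case b
    have "(2::nat)^(k-1-j') < 2^k" by (rule power_strict_increasing) (use k2 in auto)
    then show ?thesis using b by simp
  qed
qed

lemma L_good:
  assumes S: "S \<subseteq> {..<n1+k}" and of: "one_free A n1 S" and b: "b < m"
  shows "good k (L S b)"
  unfolding good_def
proof (intro allI impI)
  fix r :: nat assume r: "0 < r" "r < 2^k" "\<not> is_pow2 r"
  have finS: "finite S" using finite_subset[OF S] by simp
  have "r \<in> set N" unfolding N_def set_nonpow using r by simp
  then obtain i where i0: "i < length N" "N!i = r" unfolding in_set_conv_nth by blast
  then have i: "i < p" "r = N!i" using lenN by auto
  have lt: "b*p+i < n1" using bp_lt[OF b i(1)] n0_le by simp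
  have ofc: "\<forall>i<n1. card {j\<in>S. A i j} \<noteq> 1" using iffD1[OF one_free_card[OF finS] of] .
  have "card {j\<in>S. A (b*p+i) j} \<noteq> 1" using ofc[rule_format, OF lt] .
  then show "card {c\<in>L S b. U_entry r c} \<noteq> 1" using block_card[OF S b i(1)] i(2) by simp
qed

lemma counting:
  assumes S: "S \<subseteq> {..<n1+k}" and ne: "S \<noteq> {}" and of: "one_free A n1 S"
  shows "m * 2^(k-1) \<le> card S"
proof -
  have finS: "finite S" using finite_subset[OF S] by simp
  have Lfin: "finite (L S b)" for b using L_sub[of S b] finite_subset by blast
  have PSne: "PS S \<noteq> {}"
  proof -
    obtain j where jS: "j \<in> S" using ne by blast
    have jlt: "j < n1 + k" using jS S by auto
    show ?thesis
    proof (cases "j < n0")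
      case True
      define b where "b = j div p"
      define i where "i = j mod p"
      have ji: "j = b*p + i" unfolding b_def i_def by simp
      have i: "i < p" unfolding i_def using p_pos by simp
      have b: "b < m" unfolding b_def using True unfolding n0_def
        by (simp add: div_less_iff_less_mult p_pos)
      have "N!i \<in> L S b" unfolding L_def using i jS ji by auto
      then have "L S b \<noteq> {}" by blast
      from comb[OF L_sub this L_good[OF S of b]] obtain t where t: "t < k" "2^t \<in> L S b" by blast
      have "\<not> is_pow2 (N!i')" if "i' < p" for i' using N_prop that by blast
      moreover have "is_pow2 ((2::nat)^t)" unfolding is_pow2_def by blast
      ultimately have "2^t \<in> (\<lambda>j'. 2^(k-1-j')) ` PS S" using t(2) unfolding L_def by auto
      then show ?thesis by blast
    next
      case False
      show ?thesis
      proof (cases "j < n1")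
        case True
        define i where "i = j - n0"
        have i: "i < (m-1)*k" using True False unfolding i_def n0_def n1_def by simp
        define b where "b = i div k"
        have k0: "0 < k" using k2 by simp
        have b: "b < m - 1" unfolding b_def using i k0 by (simp add: div_less_iff_less_mult)
        have ji: "j = n0 + (b*k + i mod k)" unfolding b_def i_def using False by simp
        have "i mod k \<in> PS S" using id_equiv[OF S of b, of "i mod k"] k0 jS ji by simp
        then show ?thesis by blast
      next
        case False
        then have "j - n1 \<in> PS S" unfolding PS_def using jS jlt by auto
        then show ?thesis by blast
      qed
    qed
  qed
  have each: "2^(k-1) \<le> card (L S b)" if b: "b < m" for b
  proof -
    have "L S b \<noteq> {}" using PSne unfolding L_def by blast
    from comb[OF L_sub this L_good[OF S of b]] show ?thesis by simp
  qed
  define f where "f j = (if j < n0 then (j div p, N!(j mod p))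
      else if j < n1 then ((j - n0) div k + 1, 2^(k-1-((j-n0) mod k)))
      else (0, 2^(k-1-(j-n1))))" for j
  have sub: "Sigma {..<m} (L S) \<subseteq> f ` S"
  proof
    fix x assume "x \<in> Sigma {..<m} (L S)"
    then obtain b c where x: "x = (b,c)" "b < m" "c \<in> L S b" by blast
    from x(3) show "x \<in> f ` S" unfolding L_def
    proof
      assume "c \<in> (!) N ` {i'. i' < p \<and> b*p + i' \<in> S}"
      then obtain i where i: "i < p" "b*p+i \<in> S" "c = N!i" by blast
      have "f (b*p+i) = (b, N!i)" unfolding f_def using bp_lt[OF x(2) i(1)] i(1) p_pos by simp
      then show ?thesis using i x(1) by (metis image_eqI)
    next
      assume "c \<in> (\<lambda>j'. 2^(k-1-j')) ` PS S"
      then obtain j' where j': "j' \<in> PS S" "c = 2^(k-1-j')" by blast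
      have jk: "j' < k" using j' unfolding PS_def by simp
      show ?thesis
      proof (cases b)
        case 0
        have "f (n1 + j') = (0, 2^(k-1-j'))" unfolding f_def using n0_le by simp
        moreover have "n1 + j' \<in> S" using j' unfolding PS_def by simp
        ultimately show ?thesis using x(1) j'(2) 0 by (metis image_eqI)
      next
        case (Suc b')
        have b': "b' < m - 1" using x(2) Suc by simp
        have "n0 + (b'*k+j') \<in> S" using id_equiv[OF S of b' jk] j'(1) by simp
        moreover have "n0 + (b'*k+j') < n1"
        proof -
          have "b'*k + j' < b'*k + k" using jk by simp
          also have "\<dots> = Suc b' * k" by simp
          also have "\<dots> \<le> (m-1) * k" using b' by (intro mult_right_mono) auto
          finally show ?thesis unfolding n0_def n1_def by simp
        qed
        moreover have "(b'*k+j') div k = b'" "(b'*k+j') mod k = j'" using jk by auto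
        ultimately have "f (n0 + (b'*k+j')) = (b, c)" unfolding f_def using Suc j'(2) by simp
        then show ?thesis using x(1) \<open>n0 + (b'*k+j') \<in> S\<close> by (metis image_eqI)
      qed
    qed
  qed
  have "card (Sigma {..<m} (L S)) \<le> card (f ` S)"
    using sub finS by (intro card_mono) auto
  also have "\<dots> \<le> card S" using finS by (rule card_image_le)
  finally have "card (Sigma {..<m} (L S)) \<le> card S" .
  moreover have "card (Sigma {..<m} (L S)) = (\<Sum>b<m. card (L S b))"
    using Lfin by (simp add: card_SigmaI)
  moreover have "(\<Sum>b<m. (2::nat)^(k-1)) \<le> (\<Sum>b<m. card (L S b))"
    using each by (intro sum_mono) auto
  ultimately show ?thesis by simp
qed


lemma L_full:
  assumes b: "b < m"
  shows "L {..<n1+k} b = {1..<2^k}"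
proof -
  have e1: "PS {..<n1+k} = {..<k}" unfolding PS_def by auto
  have e2: "{i'. i' < p \<and> b*p + i' \<in> {..<n1+k}} = {..<p}"
    using bp_lt[OF b] n0_le by fastforce
  have e3: "(!) N ` {..<p} = set N" using lenN by (auto simp: set_conv_nth)
  have e4: "(\<lambda>j'. (2::nat)^(k-1-j')) ` {..<k} = (\<lambda>t. 2^t) ` {..<k}"
  proof (intro set_eqI iffI)
    fix x assume "x \<in> (\<lambda>j'. (2::nat)^(k-1-j')) ` {..<k}"
    then obtain j' where "j' < k" "x = 2^(k-1-j')" by blast
    then show "x \<in> (\<lambda>t. 2^t) ` {..<k}" by auto
  next
    fix x assume "x \<in> (\<lambda>t. (2::nat)^t) ` {..<k}"
    then obtain t where t: "t < k" "x = 2^t" by blast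
    then have "x = 2^(k-1-(k-1-t))" by simp
    moreover have "k-1-t < k" using t by simp
    ultimately show "x \<in> (\<lambda>j'. (2::nat)^(k-1-j')) ` {..<k}" by blast
  qed
  have e5: "set N \<union> (\<lambda>t. (2::nat)^t) ` {..<k} = {1..<2^k}"
  proof (intro set_eqI iffI)
    fix x assume "x \<in> set N \<union> (\<lambda>t. (2::nat)^t) ` {..<k}"
    then show "x \<in> {1..<2^k}" unfolding N_def set_nonpow by (auto simp: Suc_le_eq)
  next
    fix x assume x: "x \<in> {1..<(2::nat)^k}"
    show "x \<in> set N \<union> (\<lambda>t. (2::nat)^t) ` {..<k}"
    proof (cases "is_pow2 x")
      case True then show ?thesis using is_pow2_below[of x k] x by auto
    next
      case False then show ?thesis unfolding N_def set_nonpow using x by auto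
    qed
  qed
  show ?thesis unfolding L_def e1 e2 e3 e4 e5 ..
qed

lemma three_card:
  assumes "0 < r" "r < 2^k" "\<not> is_pow2 r"
  shows "card {c\<in>{1..<2^k}. U_entry r c} = 3"
proof -
  obtain t where t: "2^t < r" "r < 2^(Suc t)" using nonpow_has_t assms by blast
  have "{c\<in>{1..<2^k}. U_entry r c} = {r, r - 2^t, 2^t}"
  proof (intro set_eqI iffI)
    fix c assume "c \<in> {c\<in>{1..<2^k}. U_entry r c}"
    then show "c \<in> {r, r - 2^t, 2^t}" using U_entry_iff[OF t] by auto
  next
    fix c assume c: "c \<in> {r, r - 2^t, (2::nat)^t}"
    have "U_entry r c" using U_entry_iff[OF t] c by auto
    have "(2::nat)^t < 2^k" using t assms by linarith
    moreover have "r - 2^t < 2^k" using assms by linarith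
    ultimately have "1 \<le> c" "c < 2^k" using c t assms by auto
    moreover note \<open>U_entry r c\<close>
    ultimately show "c \<in> {c\<in>{1..<2^k}. U_entry r c}" by auto
  qed
  moreover have "r - 2^t < 2^t" using t by simp
  ultimately show ?thesis using t by simp
qed

lemma witness: "one_free A n1 {..<n1+k}"
proof -
  let ?S = "{..<n1+k}"
  have "card {j\<in>?S. A i j} \<noteq> 1" if i: "i < n1" for i
  proof (cases "i < n0")
    case True
    define b where "b = i div p"
    define i0 where "i0 = i mod p"
    have ii: "i = b*p + i0" unfolding b_def i0_def by simp
    have i0: "i0 < p" unfolding i0_def using p_pos by simp
    have b: "b < m" unfolding b_def using True unfolding n0_def
      by (simp add: div_less_iff_less_mult p_pos)
    have "card {j\<in>?S. A i j} = card {c\<in>L ?S b. U_entry (N!i0) c}"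
      using block_card[OF order.refl b i0] ii by simp
    also have "\<dots> = 3" unfolding L_full[OF b] using N_prop[OF i0] three_card by blast
    finally show ?thesis by simp
  next
    case False
    define i' where "i' = i - n0"
    have i': "i' < (m-1)*k" using i False unfolding i'_def n0_def n1_def by simp
    have ii: "i = n0 + i'" unfolding i'_def using False by simp
    have k0: "0 < k" using k2 by simp
    have lt: "n0 + i' < n1" using i ii by simp
    have "{x\<in>{n0+i', n1 + i' mod k}. x \<in> ?S} = {n0+i', n1 + i' mod k}"
      using lt k0 by auto
    moreover have "card {n0+i', n1 + i' mod k} = 2" using lt by simp
    ultimately have "card {j\<in>?S. A i j} = 2" using id_set[OF order.refl i'] ii by simp
    then show ?thesis by simp
  qed
  then show ?thesis using one_free_card[of ?S] by simp
qed

end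

theorem mainTheorem7:
  fixes k m :: nat
  assumes "k \<ge> 2" and "m \<ge> 1"
  shows "u_min (Ukm k m) ((2 ^ k - 1) * m - k) ((2 ^ k - 1) * m) \<ge> 2 ^ (k - 1) * m"
proof -
  interpret stp k m using assms by unfold_locales
  let ?Q = "\<lambda>c. \<exists>S. S \<subseteq> {..<n1+k} \<and> S \<noteq> {} \<and> one_free A n1 S \<and> card S = c"
  have ex: "\<exists>c. ?Q c"
  proof -
    have "0 \<in> {..<n1+k}" using k2 by simp
    then have "{..<n1+k} \<noteq> {}" by blast
    then show ?thesis using witness by blast
  qed
  have "2^(k-1) * m \<le> (LEAST c. ?Q c)"
  proof (rule LeastI2_ex[OF ex])
    fix c assume "?Q c"
    then obtain S where S: "S \<subseteq> {..<n1+k}" "S \<noteq> {}" "one_free A n1 S" "card S = c" by blast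
    have "m * 2^(k-1) \<le> card S" by (rule counting[OF S(1-3)])
    then show "2^(k-1) * m \<le> c" using S(4) by (simp add: mult.commute)
  qed
  then show ?thesis unfolding u_min_def mr_eq unfolding nc_eq A_def .
qed

end
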